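(* Let $\Lambda$ be a row-finite $k$-graph with no sources and let $\{t_\lambda\}_{\lambda\in\Lambda}$ be a permutative representation of $C^*(\Lambda)$ with index set $I$, sets $J_\lambda,K_\lambda$ and bijections $\tilde\sigma_\lambda:J_\lambda\to K_\lambda$, and let $E:I\to\Lambda^\infty$ be its encoding map. Then: (a) For each $i\in I$ and $n\in\mathbb N^k$ there are a unique $\lambda\in\Lambda^n$ and a unique $i_n\in J_\lambda$ with $\tilde\sigma_\lambda(i_n)=i$. Writing $\tilde\sigma^n(i):=i_n$, we have $\tilde\sigma_\lambda\circ\tilde\sigma^n(i)=i$ for all $i\in K_\lambda$ and $\tilde\sigma^n\circ\tilde\sigma_\lambda(i)=i$ for all $i\in J_\lambda$. (b) $\sigma_\lambda(E(i))=E(\tilde\sigma_\lambda(i))$ for all $\lambda\in\Lambda$ and $i\in J_\lambda$, and $\sigma^n(E(i))=E(\tilde\sigma^n(i))$ for all $n\in\mathbb N^k$ and $i\in I$.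
   Context: A $k$-graph ($k\ge1$) is a countable small category $\Lambda$ with a functor $d:\Lambda\to\mathbb N^k$ satisfying unique factorization: if $d(\lambda)=m+n$ there are unique $\mu,\nu$ with $\lambda=\mu\nu$, $d(\mu)=m$, $d(\nu)=n$. $\Lambda^0$ = vertices, $r,s$ = range, source, $\Lambda^n=d^{-1}(n)$, $v\Lambda^n=\{\lambda\in\Lambda^n:r(\lambda)=v\}$, $s(\lambda)\Lambda=\{\nu:r(\nu)=s(\lambda)\}$; row-finite: each $v\Lambda^n$ finite; no sources: each $v\Lambda^n$ nonempty. Infinite paths are degree-preserving functors $x:\Omega_k\to\Lambda$, where $\Omega_k$ has objects $\mathbb N^k$, morphisms $(p,q)$, $p\le q$, $d(p,q)=q-p$; $\Lambda^\infty$ is their set, $r(x)=x(0,0)$. Shift: $\sigma^m(x)(p,q)=x(p+m,q+m)$. Prefixing: for $r(x)=s(\lambda)$, $\sigma_\lambda(x)=\lambda x$ is the unique $y\in\Lambda^\infty$ with $y(0,d(\lambda))=\lambda$ and $\sigma^{d(\lambda)}(y)=x$. A representation of $C^*(\Lambda)$ is a family of partial isometries $\{t_\lambda\}$ satisfying (CK1) $\{t_v\}$ mutually orthogonal projections, (CK2) $t_\lambda t_\eta=t_{\lambda\eta}$ when $s(\lambda)=r(\eta)$, (CK3) $t_\lambda^*t_\lambda=t_{s(\lambda)}$, (CK4) $t_v=\sum_{\lambda\in v\Lambda^n}t_\lambda t_\lambda^*$. It is permutative if the Hilbert space has an orthonormal basis $\{e_i\}_{i\in I}$ such that for each $\lambda$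 there are $J_\lambda,K_\lambda\subseteq I$ and a bijection $\tilde\sigma_\lambda:J_\lambda\to K_\lambda$ with: (a) for each $n$, $\bigcup_{\lambda\in\Lambda^n}J_\lambda=\bigcup_{\lambda\in\Lambda^n}K_\lambda=I$; (b) for $\lambda\in\Lambda,\nu\in s(\lambda)\Lambda$: $K_\nu\subseteq J_\lambda$ and $\tilde\sigma_\lambda\circ\tilde\sigma_\nu=\tilde\sigma_{\lambda\nu}$; (c) $t_\lambda e_i=e_{\tilde\sigma_\lambda(i)}$ for $i\in J_\lambda$, $t_\lambda e_i=0$ otherwise; (d) $t_\lambda^*e_{\tilde\sigma_\lambda(i)}=e_i$ for $i\in J_\lambda$, and $t_\lambda^*e_j=0$ for $j\in K_{\lambda'}$ when $\lambda'\ne\lambda$, $d(\lambda')=d(\lambda)$. For such a representation the sets $K_\lambda$, $\lambda\in\Lambda^n$, partition $I$, and the encoding map $E:I\to\Lambda^\infty$ is the infinite path with $E(i)(0,n)=$ the unique $\lambda\in\Lambda^n$ with $i\in K_\lambda$. *)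

theory Defs
  imports "HOL-Analysis.Analysis" "HOL-Library.Function_Algebras"
begin

text \<open>A k-graph is given by its set of morphisms L, range and source maps r, s (objects
are identified with the identity morphisms), composition c (c x y is defined when
s x = r y) and the degree functor d into N^k, where N^k is modelled as 'k => nat
for a finite index type 'k (k = CARD('k) >= 1), with pointwise order and addition.\<close>

definition k_graph ::
  "'a set \<Rightarrow> ('a \<Rightarrow> 'a) \<Rightarrow> ('a \<Rightarrow> 'a) \<Rightarrow> ('a \<Rightarrow> 'a \<Rightarrow> 'a) \<Rightarrow> ('a \<Rightarrow> 'k::finite \<Rightarrow> nat) \<Rightarrow> bool"
  where "k_graph L r s c d \<longleftrightarrow>
    countable L \<and>
    (\<forall>x\<in>L. r x \<in> L \<and> s x \<in> L \<and> r (r x) = r x \<and> s (r x) = r x \<and>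
             r (s x) = s x \<and> s (s x) = s x \<and> c (r x) x = x \<and> c x (s x) = x) \<and>
    (\<forall>x\<in>L. \<forall>y\<in>L. s x = r y \<longrightarrow> c x y \<in> L \<and> r (c x y) = r x \<and> s (c x y) = s y) \<and>
    (\<forall>x\<in>L. \<forall>y\<in>L. \<forall>z\<in>L. s x = r y \<and> s y = r z \<longrightarrow> c (c x y) z = c x (c y z)) \<and>
    (\<forall>x\<in>L. d (r x) = 0) \<and>
    (\<forall>x\<in>L. \<forall>y\<in>L. s x = r y \<longrightarrow> d (c x y) = d x + d y) \<and>
    (\<forall>x\<in>L. \<forall>m n. d x = m + n \<longrightarrow>
       (\<exists>!p. fst p \<in> L \<and> snd p \<in> L \<and> s (fst p) = r (snd p) \<and>
             c (fst p) (snd p) = x \<and> d (fst p) = m \<and> d (snd p) = n))"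

definition vertices :: "'a set \<Rightarrow> ('a \<Rightarrow> 'a) \<Rightarrow> 'a set"
  where "vertices L r = r ` L"

definition row_finite :: "'a set \<Rightarrow> ('a \<Rightarrow> 'a) \<Rightarrow> ('a \<Rightarrow> 'k \<Rightarrow> nat) \<Rightarrow> bool"
  where "row_finite L r d \<longleftrightarrow>
    (\<forall>v\<in>vertices L r. \<forall>n. finite {x\<in>L. r x = v \<and> d x = n})"

definition no_sources :: "'a set \<Rightarrow> ('a \<Rightarrow> 'a) \<Rightarrow> ('a \<Rightarrow> 'k \<Rightarrow> nat) \<Rightarrow> bool"
  where "no_sources L r d \<longleftrightarrow>
    (\<forall>v\<in>vertices L r. \<forall>n. {x\<in>L. r x = v \<and> d x = n} \<noteq> {})"

text \<open>Infinite paths: degree preserving functors Omega_k -> L. A path is a function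
x p q defined on pairs p <= q (the morphisms (p,q) of Omega_k); outside this domain
it is normalised to undefined, so that paths are equal iff they agree on Omega_k.\<close>
definition inf_paths ::
  "'a set \<Rightarrow> ('a \<Rightarrow> 'a) \<Rightarrow> ('a \<Rightarrow> 'a) \<Rightarrow> ('a \<Rightarrow> 'a \<Rightarrow> 'a) \<Rightarrow> ('a \<Rightarrow> 'k::finite \<Rightarrow> nat)
     \<Rightarrow> (('k \<Rightarrow> nat) \<Rightarrow> ('k \<Rightarrow> nat) \<Rightarrow> 'a) set"
  where "inf_paths L r s c d = {x.
    (\<forall>p q. \<not> p \<le> q \<longrightarrow> x p q = undefined) \<and>
    (\<forall>p q. p \<le> q \<longrightarrow> x p q \<in> L \<and> d (x p q) = q - p) \<and>
    (\<forall>p. r (x p p) = x p p) \<and>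
    (\<forall>p q m. p \<le> q \<and> q \<le> m \<longrightarrow> s (x p q) = r (x q m) \<and> c (x p q) (x q m) = x p m)}"

definition shift :: "('k \<Rightarrow> nat) \<Rightarrow> (('k \<Rightarrow> nat) \<Rightarrow> ('k \<Rightarrow> nat) \<Rightarrow> 'a)
     \<Rightarrow> (('k \<Rightarrow> nat) \<Rightarrow> ('k \<Rightarrow> nat) \<Rightarrow> 'a)"
  where "shift m x = (\<lambda>p q. x (p + m) (q + m))"

definition prefix ::
  "'a set \<Rightarrow> ('a \<Rightarrow> 'a) \<Rightarrow> ('a \<Rightarrow> 'a) \<Rightarrow> ('a \<Rightarrow> 'a \<Rightarrow> 'a) \<Rightarrow> ('a \<Rightarrow> 'k::finite \<Rightarrow> nat)
     \<Rightarrow> 'a \<Rightarrow> (('k \<Rightarrow> nat) \<Rightarrow> ('k \<Rightarrow> nat) \<Rightarrow> 'a) \<Rightarrow> (('k \<Rightarrow> nat) \<Rightarrow> ('k \<Rightarrow> nat) \<Rightarrow> 'a)"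
  where "prefix L r s c d lam x =
    (THE y. y \<in> inf_paths L r s c d \<and> y 0 (d lam) = lam \<and> shift (d lam) y = x)"

text \<open>Permutative representation: basis e indexed by I, operators t lam and their
adjoints tstar lam acting on a vector space 'h (only the action on the basis matters).\<close>
definition permutative_rep ::
  "'a set \<Rightarrow> ('a \<Rightarrow> 'a) \<Rightarrow> ('a \<Rightarrow> 'a) \<Rightarrow> ('a \<Rightarrow> 'a \<Rightarrow> 'a) \<Rightarrow> ('a \<Rightarrow> 'k::finite \<Rightarrow> nat)
     \<Rightarrow> 'i set \<Rightarrow> ('a \<Rightarrow> 'i set) \<Rightarrow> ('a \<Rightarrow> 'i set) \<Rightarrow> ('a \<Rightarrow> 'i \<Rightarrow> 'i)
     \<Rightarrow> ('i \<Rightarrow> 'h::zero) \<Rightarrow> ('a \<Rightarrow> 'h \<Rightarrow> 'h) \<Rightarrow> ('a \<Rightarrow> 'h \<Rightarrow> 'h) \<Rightarrow> bool"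
  where "permutative_rep L r s c d I J K st e t tstar \<longleftrightarrow>
    inj_on e I \<and> (\<forall>i\<in>I. e i \<noteq> 0) \<and>
    (\<forall>x\<in>L. J x \<subseteq> I \<and> K x \<subseteq> I \<and> bij_betw (st x) (J x) (K x)) \<and>
    (\<forall>n. (\<Union>x\<in>{x\<in>L. d x = n}. J x) = I \<and> (\<Union>x\<in>{x\<in>L. d x = n}. K x) = I) \<and>
    (\<forall>x\<in>L. \<forall>y\<in>L. r y = s x \<longrightarrow>
        K y \<subseteq> J x \<and> J (c x y) = J y \<and> (\<forall>i\<in>J y. st x (st y i) = st (c x y) i)) \<and>
    (\<forall>x\<in>L. \<forall>i\<in>I. t x (e i) = (if i \<in> J x then e (st x i) else 0)) \<and>
    (\<forall>x\<in>L. (\<forall>i\<in>J x. tstar x (e (st x i)) = e i) \<and>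
       (\<forall>y\<in>L. y \<noteq> x \<and> d y = d x \<longrightarrow> (\<forall>j\<in>K y. tstar x (e j) = 0)))"

definition encoding ::
  "'a set \<Rightarrow> ('a \<Rightarrow> 'a) \<Rightarrow> ('a \<Rightarrow> 'a) \<Rightarrow> ('a \<Rightarrow> 'a \<Rightarrow> 'a) \<Rightarrow> ('a \<Rightarrow> 'k::finite \<Rightarrow> nat)
     \<Rightarrow> ('a \<Rightarrow> 'i set) \<Rightarrow> 'i \<Rightarrow> (('k \<Rightarrow> nat) \<Rightarrow> ('k \<Rightarrow> nat) \<Rightarrow> 'a)"
  where "encoding L r s c d K i =
    (THE x. x \<in> inf_paths L r s c d \<and>
        (\<forall>n. x 0 n = (THE y. y \<in> L \<and> d y = n \<and> i \<in> K y)))"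

definition sigma_tilde_n ::
  "'a set \<Rightarrow> ('a \<Rightarrow> 'k \<Rightarrow> nat) \<Rightarrow> ('a \<Rightarrow> 'i set) \<Rightarrow> ('a \<Rightarrow> 'i \<Rightarrow> 'i) \<Rightarrow> ('k \<Rightarrow> nat) \<Rightarrow> 'i \<Rightarrow> 'i"
  where "sigma_tilde_n L d J st n i =
    snd (THE p. fst p \<in> L \<and> d (fst p) = n \<and> snd p \<in> J (fst p) \<and> st (fst p) (snd p) = i)"

end

theory Submission
  imports Defs
begin
lemma fa1: "(p::'k\<Rightarrow>nat) \<le> q \<Longrightarrow> p + (q - p) = q"
  by (auto simp: le_fun_def fun_eq_iff fun_diff_def plus_fun_def)
lemma fa2: "(q + m) - (p + m) = (q::'k\<Rightarrow>nat) - p"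
  by (auto simp: fun_eq_iff fun_diff_def plus_fun_def)
lemma fa3: "(p::'k\<Rightarrow>nat) \<le> q \<Longrightarrow> q \<le> m \<Longrightarrow> (q - p) + (m - q) = m - p"
  by (auto simp: le_fun_def fun_eq_iff fun_diff_def plus_fun_def)
lemma fa4: "(p + m \<le> q + m) = (p \<le> (q::'k\<Rightarrow>nat))"
  by (auto simp: le_fun_def plus_fun_def)
lemma fa5: "(0::'k\<Rightarrow>nat) \<le> q" "q - (0::'k\<Rightarrow>nat) = q" "(p::'k\<Rightarrow>nat) - p = 0" "(m::'k\<Rightarrow>nat) \<le> n + m"
  by (auto simp: le_fun_def fun_eq_iff fun_diff_def plus_fun_def)
lemma fa6: "(n::'k\<Rightarrow>nat) \<le> n + m"
  by (auto simp: le_fun_def plus_fun_def)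

locale PR =
  fixes L :: "'a set" and r s :: "'a \<Rightarrow> 'a" and c :: "'a \<Rightarrow> 'a \<Rightarrow> 'a"
    and d :: "'a \<Rightarrow> 'k::finite \<Rightarrow> nat"
    and I :: "'i set" and J K :: "'a \<Rightarrow> 'i set" and st :: "'a \<Rightarrow> 'i \<Rightarrow> 'i"
    and e :: "'i \<Rightarrow> 'h::zero" and t tstar :: "'a \<Rightarrow> 'h \<Rightarrow> 'h"
  assumes kg: "k_graph L r s c d"
    and pr: "permutative_rep L r s c d I J K st e t tstar"
begin

lemmas kgu = kg[unfolded k_graph_def, THEN conjunct2]
lemmas pru = pr[unfolded permutative_rep_def]

lemma kg_rs: "x \<in> L \<Longrightarrow> r x \<in> L \<and> s x \<in> L \<and> r (r x) = r x \<and> s (r x) = r x \<and>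
             r (s x) = s x \<and> s (s x) = s x \<and> c (r x) x = x \<and> c x (s x) = x"
  using kgu[THEN conjunct1] by blast
lemma kg_comp: "x \<in> L \<Longrightarrow> y \<in> L \<Longrightarrow> s x = r y \<Longrightarrow> c x y \<in> L \<and> r (c x y) = r x \<and> s (c x y) = s y"
  using kgu[THEN conjunct2, THEN conjunct1] by blast
lemma kg_assoc: "x \<in> L \<Longrightarrow> y \<in> L \<Longrightarrow> z \<in> L \<Longrightarrow> s x = r y \<Longrightarrow> s y = r z \<Longrightarrow> c (c x y) z = c x (c y z)"
  using kgu[THEN conjunct2, THEN conjunct2, THEN conjunct1] by blast
lemma kg_d0: "x \<in> L \<Longrightarrow> d (r x) = 0"
  using kgu[THEN conjunct2, THEN conjunct2, THEN conjunct2, THEN conjunct1] by blast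
lemma kg_dc: "x \<in> L \<Longrightarrow> y \<in> L \<Longrightarrow> s x = r y \<Longrightarrow> d (c x y) = d x + d y"
  using kgu[THEN conjunct2, THEN conjunct2, THEN conjunct2, THEN conjunct2, THEN conjunct1] by blast
lemma kg_uf: "x \<in> L \<Longrightarrow> d x = m + n \<Longrightarrow> (\<exists>!p. fst p \<in> L \<and> snd p \<in> L \<and> s (fst p) = r (snd p) \<and>
             c (fst p) (snd p) = x \<and> d (fst p) = m \<and> d (snd p) = n)"
  using kgu[THEN conjunct2, THEN conjunct2, THEN conjunct2, THEN conjunct2, THEN conjunct2] by blast
lemma kg_ds: "x \<in> L \<Longrightarrow> d (s x) = 0"
  using kg_rs kg_d0 by metis

lemma kg_uniq:
  assumes "a1 \<in> L" "b1 \<in> L" "a2 \<in> L" "b2 \<in> L" "s a1 = r b1" "s a2 = r b2"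
    "c a1 b1 = c a2 b2" "d a1 = d a2" "d b1 = d b2"
  shows "a1 = a2 \<and> b1 = b2"
proof -
  have x: "c a1 b1 \<in> L" using kg_comp assms by blast
  have "d (c a1 b1) = d a1 + d b1" using kg_dc assms by blast
  from kg_uf[OF x this] have "\<exists>!p. fst p \<in> L \<and> snd p \<in> L \<and> s (fst p) = r (snd p) \<and>
             c (fst p) (snd p) = c a1 b1 \<and> d (fst p) = d a1 \<and> d (snd p) = d b1" .
  then have "(a1, b1) = (a2, b2)" using assms by (metis fst_conv snd_conv)
  then show ?thesis by simp
qed

lemma pr_JK: "x \<in> L \<Longrightarrow> J x \<subseteq> I \<and> K x \<subseteq> I \<and> bij_betw (st x) (J x) (K x)"
  using pru[THEN conjunct2, THEN conjunct2, THEN conjunct1] by blast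
lemma pr_cover: "(\<Union>x\<in>{x\<in>L. d x = n}. J x) = I \<and> (\<Union>x\<in>{x\<in>L. d x = n}. K x) = I"
  using pru[THEN conjunct2, THEN conjunct2, THEN conjunct2, THEN conjunct1] by blast
lemma pr_comp: "x \<in> L \<Longrightarrow> y \<in> L \<Longrightarrow> s x = r y \<Longrightarrow>
        K y \<subseteq> J x \<and> J (c x y) = J y \<and> (\<forall>i\<in>J y. st x (st y i) = st (c x y) i)"
  using pru[THEN conjunct2, THEN conjunct2, THEN conjunct2, THEN conjunct2, THEN conjunct1] by (metis (no_types))
lemma pr_e: "inj_on e I" "i \<in> I \<Longrightarrow> e i \<noteq> 0"
  using pru[THEN conjunct1] pru[THEN conjunct2, THEN conjunct1] by blast+
lemma pr_tstar: "x \<in> L \<Longrightarrow> (\<forall>i\<in>J x. tstar x (e (st x i)) = e i) \<and>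
       (\<forall>y\<in>L. y \<noteq> x \<and> d y = d x \<longrightarrow> (\<forall>j\<in>K y. tstar x (e j) = 0))"
  using pru[THEN conjunct2, THEN conjunct2, THEN conjunct2, THEN conjunct2, THEN conjunct2, THEN conjunct2] by blast

lemma K_disj: assumes "x \<in> L" "y \<in> L" "d x = d y" "i \<in> K x" "i \<in> K y" shows "x = y"
proof (rule ccontr)
  assume ne: "x \<noteq> y"
  have "i \<in> st x ` J x" using pr_JK[OF assms(1)] assms(4) bij_betw_imp_surj_on by metis
  then obtain j where j: "j \<in> J x" "st x j = i" by blast
  have "tstar x (e i) = e j" using pr_tstar[OF assms(1)] j by blast
  moreover have "tstar x (e i) = 0" using pr_tstar[OF assms(1)] assms ne by metis
  moreover have "j \<in> I" using pr_JK[OF assms(1)] j by blast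
  ultimately show False using pr_e(2) by metis
qed

lemma K_ex: "i \<in> I \<Longrightarrow> \<exists>x\<in>L. d x = n \<and> i \<in> K x"
  using pr_cover[of n] by blast

definition lam where "lam i n = (THE y. y \<in> L \<and> d y = n \<and> i \<in> K y)"

lemma lam_prop: assumes "i \<in> I" shows "lam i n \<in> L \<and> d (lam i n) = n \<and> i \<in> K (lam i n)"
proof -
  have "\<exists>!y. y \<in> L \<and> d y = n \<and> i \<in> K y" using K_ex[OF assms] K_disj by metis
  then show ?thesis unfolding lam_def by (rule theI')
qed

lemma lam_eq: assumes "y \<in> L" "i \<in> K y" shows "lam i (d y) = y"
proof -
  have "i \<in> I" using pr_JK assms by blast
  then show ?thesis using lam_prop[of i "d y"] K_disj assms by metis
qed

lemma K_comp: assumes "x \<in> L" "y \<in> L" "s x = r y" shows "K (c x y) = st x ` K y"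
proof -
  have cl: "c x y \<in> L" using kg_comp assms by blast
  have "K (c x y) = st (c x y) ` J (c x y)" using pr_JK[OF cl] bij_betw_imp_surj_on by metis
  also have "\<dots> = st (c x y) ` J y" using pr_comp assms by metis
  also have "\<dots> = st x ` (st y ` J y)" using pr_comp[OF assms] by (auto simp: image_iff)
  also have "\<dots> = st x ` K y" using pr_JK[OF assms(2)] bij_betw_imp_surj_on by metis
  finally show ?thesis .
qed


abbreviation "paths \<equiv> inf_paths L r s c d"

lemma path_undef: "y \<in> paths \<Longrightarrow> \<not> p \<le> q \<Longrightarrow> y p q = undefined"
  unfolding inf_paths_def by blast
lemma path_L: "y \<in> paths \<Longrightarrow> p \<le> q \<Longrightarrow> y p q \<in> L \<and> d (y p q) = q - p"
  unfolding inf_paths_def by blast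
lemma path_r: "y \<in> paths \<Longrightarrow> r (y p p) = y p p"
  unfolding inf_paths_def by blast
lemma path_c: "y \<in> paths \<Longrightarrow> p \<le> q \<Longrightarrow> q \<le> m \<Longrightarrow> s (y p q) = r (y q m) \<and> c (y p q) (y q m) = y p m"
  unfolding inf_paths_def by blast

lemma path_unique:
  assumes y: "y \<in> paths" and z: "z \<in> paths" and eq: "\<And>n. y 0 n = z 0 n"
  shows "y = z"
proof (intro ext)
  fix p q :: "'k \<Rightarrow> nat"
  show "y p q = z p q"
  proof (cases "p \<le> q")
    case False
    then show ?thesis using path_undef y z by metis
  next
    case True
    have 0: "0 \<le> p" by (rule fa5)
    have A: "y 0 p \<in> L" "y p q \<in> L" "z 0 p \<in> L" "z p q \<in> L"
      "d (y 0 p) = d (z 0 p)" "d (y p q) = d (z p q)"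
      using path_L[OF y] path_L[OF z] True 0 by auto
    have B: "s (y 0 p) = r (y p q)" "c (y 0 p) (y p q) = y 0 q"
      using path_c[OF y 0 True] by auto
    have C: "s (z 0 p) = r (z p q)" "c (z 0 p) (z p q) = z 0 q"
      using path_c[OF z 0 True] by auto
    show ?thesis using kg_uniq[OF A(1,2,3,4) B(1) C(1) _ A(5,6)] B(2) C(2) eq by metis
  qed
qed

lemma shift_path: assumes y: "y \<in> paths" shows "shift m y \<in> paths"
  unfolding inf_paths_def shift_def
proof (intro CollectI conjI allI impI)
  fix p q :: "'k \<Rightarrow> nat" assume "\<not> p \<le> q" then show "y (p + m) (q + m) = undefined" using path_undef[OF y] fa4 by metis
next
  fix p q :: "'k \<Rightarrow> nat" assume "p \<le> q" then show "y (p + m) (q + m) \<in> L" using path_L[OF y] fa4 by metis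
next
  fix p q :: "'k \<Rightarrow> nat" assume "p \<le> q" then show "d (y (p + m) (q + m)) = q - p" using path_L[OF y] fa4 fa2 by metis
next
  fix p :: "'k \<Rightarrow> nat" show "r (y (p + m) (p + m)) = y (p + m) (p + m)" using path_r[OF y] by metis
next
  fix p q n :: "'k \<Rightarrow> nat" assume "p \<le> q \<and> q \<le> n" then show "s (y (p + m) (q + m)) = r (y (q + m) (n + m))"
    using path_c[OF y] fa4 by metis
next
  fix p q n :: "'k \<Rightarrow> nat" assume "p \<le> q \<and> q \<le> n" then show "c (y (p + m) (q + m)) (y (q + m) (n + m)) = y (p + m) (n + m)"
    using path_c[OF y] fa4 by metis
qed

definition fac where "fac i p q = (THE pr. fst pr \<in> L \<and> snd pr \<in> L \<and> s (fst pr) = r (snd pr) \<and>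
    c (fst pr) (snd pr) = lam i q \<and> d (fst pr) = p \<and> d (snd pr) = q - p)"

definition pth where "pth i = (\<lambda>p q. if p \<le> q then snd (fac i p q) else undefined)"

lemma pth_fac:
  assumes i: "i \<in> I" and pq: "p \<le> q"
  shows "pth i p q \<in> L \<and> s (lam i p) = r (pth i p q) \<and> c (lam i p) (pth i p q) = lam i q \<and> d (pth i p q) = q - p"
proof -
  have lq: "lam i q \<in> L" "d (lam i q) = p + (q - p)" "i \<in> K (lam i q)" using lam_prop[OF i] fa1[OF pq] by auto
  have F: "fst (fac i p q) \<in> L \<and> snd (fac i p q) \<in> L \<and> s (fst (fac i p q)) = r (snd (fac i p q)) \<and>
    c (fst (fac i p q)) (snd (fac i p q)) = lam i q \<and> d (fst (fac i p q)) = p \<and> d (snd (fac i p q)) = q - p"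
    unfolding fac_def by (rule theI'[OF kg_uf[OF lq(1,2)]])
  define a where "a = fst (fac i p q)"
  define b where "b = snd (fac i p q)"
  have F': "a \<in> L" "b \<in> L" "s a = r b" "c a b = lam i q" "d a = p" "d b = q - p" using F a_def b_def by auto
  have "K (lam i q) = st a ` K b" using K_comp F' by metis
  also have "\<dots> \<subseteq> st a ` J a" using pr_comp[OF F'(1,2,3)] by blast
  also have "\<dots> = K a" using pr_JK[OF F'(1)] bij_betw_imp_surj_on by metis
  finally have "i \<in> K a" using lq(3) by blast
  then have "lam i p = a" using lam_eq F' by metis
  then show ?thesis using F' pq unfolding pth_def b_def by simp
qed

lemma pth_unique:
  assumes i: "i \<in> I" and pq: "p \<le> q" and v: "v \<in> L" "s (lam i p) = r v" "c (lam i p) v = lam i q" "d v = q - p"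
  shows "v = pth i p q"
  using kg_uniq[of "lam i p" v "lam i p" "pth i p q"] pth_fac[OF i pq] lam_prop[OF i] v by metis

lemma pth_path: assumes i: "i \<in> I" shows "pth i \<in> paths"
  unfolding inf_paths_def
proof (intro CollectI conjI allI impI)
  fix p q :: "'k \<Rightarrow> nat" assume "\<not> p \<le> q" then show "pth i p q = undefined" unfolding pth_def by simp
next
  fix p q :: "'k \<Rightarrow> nat" assume "p \<le> q" then show "pth i p q \<in> L" using pth_fac[OF i] by blast
next
  fix p q :: "'k \<Rightarrow> nat" assume "p \<le> q" then show "d (pth i p q) = q - p" using pth_fac[OF i] by blast
next
  fix p :: "'k \<Rightarrow> nat"
  have l: "lam i p \<in> L" using lam_prop[OF i] by blast
  have "s (lam i p) = pth i p p"
    apply (rule pth_unique[OF i order_refl])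
    using kg_rs[OF l] kg_ds[OF l] fa5(3)[of p] by auto
  then show "r (pth i p p) = pth i p p" using kg_rs[OF l] by metis
next
  fix p q m :: "'k \<Rightarrow> nat" assume a: "p \<le> q \<and> q \<le> m"
  then have pm: "p \<le> m" by (meson order_trans)
  have P: "pth i p q \<in> L" "s (lam i p) = r (pth i p q)" "c (lam i p) (pth i p q) = lam i q" "d (pth i p q) = q - p"
    using pth_fac[OF i] a by blast+
  have Q: "pth i q m \<in> L" "s (lam i q) = r (pth i q m)" "c (lam i q) (pth i q m) = lam i m" "d (pth i q m) = m - q"
    using pth_fac[OF i] a by blast+
  have l: "lam i p \<in> L" using lam_prop[OF i] by blast
  have sD: "s (pth i p q) = r (pth i q m)" using Q(2) P(3) kg_comp[OF l P(1,2)] by metis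
  then show "s (pth i p q) = r (pth i q m)" .
  have cl: "c (pth i p q) (pth i q m) \<in> L" "r (c (pth i p q) (pth i q m)) = r (pth i p q)"
    using kg_comp[OF P(1) Q(1) sD] by auto
  have dd: "d (c (pth i p q) (pth i q m)) = m - p" using kg_dc[OF P(1) Q(1) sD] P(4) Q(4) fa3 a by metis
  have "c (lam i p) (c (pth i p q) (pth i q m)) = lam i m"
    using kg_assoc[OF l P(1) Q(1) P(2) sD] P(3) Q(3) by metis
  then show "c (pth i p q) (pth i q m) = pth i p m"
    using pth_unique[OF i pm cl(1) _ _ dd] cl(2) P(2) by metis
qed

lemma pth_0: assumes i: "i \<in> I" shows "pth i 0 n = lam i n"
proof -
  have z: "(0::'k\<Rightarrow>nat) \<le> n" by (rule fa5)
  have P: "pth i 0 n \<in> L" "s (lam i 0) = r (pth i 0 n)" "c (lam i 0) (pth i 0 n) = lam i n" "d (pth i 0 n) = n - 0"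
    using pth_fac[OF i z] by blast+
  have l: "lam i n \<in> L" "d (lam i n) = n" "lam i 0 \<in> L" "d (lam i 0) = 0" using lam_prop[OF i] by auto
  have R: "r (lam i n) \<in> L" "s (r (lam i n)) = r (lam i n)" "c (r (lam i n)) (lam i n) = lam i n" "d (r (lam i n)) = 0"
    using kg_rs[OF l(1)] kg_d0[OF l(1)] by auto
  show ?thesis using kg_uniq[OF l(3) P(1) R(1) l(1) P(2) _ _ _] R P l fa5(2) by metis
qed

definition E where "E i = encoding L r s c d K i"

lemma E_eq: assumes i: "i \<in> I" and w: "w \<in> paths" "\<And>n. w 0 n = lam i n"
  shows "E i = w"
proof -
  have ex: "\<exists>!x. x \<in> paths \<and> (\<forall>n. x 0 n = lam i n)"
  proof
    show "pth i \<in> paths \<and> (\<forall>n. pth i 0 n = lam i n)" using pth_path[OF i] pth_0[OF i] by blast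
  next
    fix x assume "x \<in> paths \<and> (\<forall>n. x 0 n = lam i n)"
    then show "x = pth i" using path_unique pth_path[OF i] pth_0[OF i] by metis
  qed
  have "E i = (THE x. x \<in> paths \<and> (\<forall>n. x 0 n = lam i n))" unfolding E_def encoding_def lam_def ..
  also have "\<dots> = w" using the1_equality[OF ex] w by blast
  finally show ?thesis .
qed

lemma E_path: assumes i: "i \<in> I" shows "E i \<in> paths" "E i 0 n = lam i n"
  using E_eq[OF i pth_path[OF i] pth_0[OF i]] pth_path[OF i] pth_0[OF i] by auto


lemma K_sub_I: "x \<in> L \<Longrightarrow> i \<in> K x \<Longrightarrow> i \<in> I" using pr_JK by blast
lemma J_sub_I: "x \<in> L \<Longrightarrow> i \<in> J x \<Longrightarrow> i \<in> I" using pr_JK by blast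
lemma st_K: "x \<in> L \<Longrightarrow> i \<in> J x \<Longrightarrow> st x i \<in> K x" using pr_JK bij_betwE by metis

lemma shift_E:
  assumes x: "x \<in> L" and i: "i \<in> J x"
  shows "shift (d x) (E (st x i)) = E i"
proof -
  have iI: "i \<in> I" using J_sub_I[OF x i] .
  have sK: "st x i \<in> K x" using st_K[OF x i] .
  have sI: "st x i \<in> I" using K_sub_I[OF x sK] .
  define z where "z = E (st x i)"
  have z: "z \<in> paths" "\<And>n. z 0 n = lam (st x i) n" using E_path[OF sI] z_def by auto
  have z0: "z 0 (d x) = x" using z(2) lam_eq[OF x sK] by simp
  show ?thesis unfolding z_def[symmetric]
  proof (rule E_eq[OF iI shift_path[OF z(1)], symmetric])
    fix n
    define v where "v = shift (d x) z 0 n"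
    have v: "v = z (d x) (n + d x)" unfolding v_def shift_def by simp
    have le1: "0 \<le> d x" "d x \<le> n + d x" using fa5 by auto
    have vL: "v \<in> L" "d v = n" using path_L[OF z(1) le1(2)] v fa2[of n "d x" 0] by (auto simp: fa5)
    have C: "s x = r v" "c x v = z 0 (n + d x)" using path_c[OF z(1) le1] z0 v by auto
    have "st x i \<in> K (z 0 (n + d x))" using z(2) lam_prop[OF sI] by metis
    then have "st x i \<in> st x ` K v" using K_comp[OF x vL(1) C(1)] C(2) by metis
    moreover have "K v \<subseteq> J x" using pr_comp[OF x vL(1) C(1)] by blast
    moreover have "inj_on (st x) (J x)" using pr_JK[OF x] bij_betw_imp_inj_on by metis
    ultimately have "i \<in> K v" using i by (auto dest: inj_onD)
    then show "v = lam i n" using lam_eq[OF vL(1)] vL(2) by metis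
  qed
qed

lemma prefix_E:
  assumes x: "x \<in> L" and i: "i \<in> J x"
  shows "prefix L r s c d x (E i) = E (st x i)"
proof -
  have sK: "st x i \<in> K x" using st_K[OF x i] .
  have sI: "st x i \<in> I" using K_sub_I[OF x sK] .
  have P: "E (st x i) \<in> paths \<and> E (st x i) 0 (d x) = x \<and> shift (d x) (E (st x i)) = E i"
    using E_path[OF sI] lam_eq[OF x sK] shift_E[OF x i] by auto
  have U: "y1 = y2" if y1: "y1 \<in> paths \<and> y1 0 (d x) = x \<and> shift (d x) y1 = E i"
    and y2: "y2 \<in> paths \<and> y2 0 (d x) = x \<and> shift (d x) y2 = E i" for y1 y2
  proof (rule path_unique)
    show "y1 \<in> paths" "y2 \<in> paths" using y1 y2 by auto
    fix n :: "'k \<Rightarrow> nat"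
    have le1: "0 \<le> d x" "d x \<le> n + d x" "0 \<le> n" "n \<le> n + d x" using fa5 fa6 by auto
    have m: "y1 0 (n + d x) = y2 0 (n + d x)"
    proof -
      have "shift (d x) y1 0 n = shift (d x) y2 0 n" using y1 y2 by simp
      then have eq: "y1 (d x) (n + d x) = y2 (d x) (n + d x)" by (simp add: shift_def)
      have "y1 0 (n + d x) = c x (y1 (d x) (n + d x))" using path_c[of y1 0 "d x" "n + d x"] y1 le1
        by simp
      moreover have "y2 0 (n + d x) = c x (y2 (d x) (n + d x))" using path_c[of y2 0 "d x" "n + d x"] y2 le1
        by simp
      ultimately show ?thesis using eq by simp
    qed
    have A: "y1 0 n \<in> L" "y1 n (n + d x) \<in> L" "y2 0 n \<in> L" "y2 n (n + d x) \<in> L"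
      "d (y1 0 n) = d (y2 0 n)" "d (y1 n (n + d x)) = d (y2 n (n + d x))"
      using path_L[of y1] path_L[of y2] y1 y2 le1 by auto
    have B: "s (y1 0 n) = r (y1 n (n + d x))" "c (y1 0 n) (y1 n (n + d x)) = y1 0 (n + d x)"
      using path_c[of y1 0 n "n + d x"] y1 le1 by auto
    have C: "s (y2 0 n) = r (y2 n (n + d x))" "c (y2 0 n) (y2 n (n + d x)) = y2 0 (n + d x)"
      using path_c[of y2 0 n "n + d x"] y2 le1 by auto
    show "y1 0 n = y2 0 n" using kg_uniq[OF A(1-4) B(1) C(1) _ A(5,6)] B(2) C(2) m by metis
  qed
  have "prefix L r s c d x (E i) = (THE y. y \<in> paths \<and> y 0 (d x) = x \<and> shift (d x) y = E i)"
    unfolding prefix_def ..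
  also have "\<dots> = E (st x i)" using the1_equality[of "\<lambda>y. y \<in> paths \<and> y 0 (d x) = x \<and> shift (d x) y = E i"] P U
    by blast
  finally show ?thesis .
qed

abbreviation "sig \<equiv> sigma_tilde_n L d J st"

lemma partA: assumes iI: "i \<in> I"
  shows "\<exists>!p. fst p \<in> L \<and> d (fst p) = n \<and> snd p \<in> J (fst p) \<and> st (fst p) (snd p) = i"
proof -
  have l: "lam i n \<in> L" "d (lam i n) = n" "i \<in> K (lam i n)" using lam_prop[OF iI] by auto
  have "i \<in> st (lam i n) ` J (lam i n)" using pr_JK[OF l(1)] l(3) bij_betw_imp_surj_on by metis
  then obtain j where j: "j \<in> J (lam i n)" "st (lam i n) j = i" by (metis imageE)
  show ?thesis
  proof
    show "fst (lam i n, j) \<in> L \<and> d (fst (lam i n, j)) = n \<and> snd (lam i n, j) \<in> J (fst (lam i n, j)) \<and> st (fst (lam i n, j)) (snd (lam i n, j)) = i"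
      using l j by simp
  next
    fix p assume p: "fst p \<in> L \<and> d (fst p) = n \<and> snd p \<in> J (fst p) \<and> st (fst p) (snd p) = i"
    have "i \<in> K (fst p)" using p st_K by metis
    then have "fst p = lam i n" using lam_eq p by metis
    moreover have "inj_on (st (lam i n)) (J (lam i n))" using pr_JK[OF l(1)] bij_betw_imp_inj_on by metis
    ultimately have "snd p = j" using p j by (metis inj_onD)
    then show "p = (lam i n, j)" using \<open>fst p = lam i n\<close> by (metis prod.collapse)
  qed
qed

lemma sig_prop: assumes iI: "i \<in> I"
  shows "sig n i \<in> J (lam i n) \<and> st (lam i n) (sig n i) = i"
proof -
  define p where "p = (THE p. fst p \<in> L \<and> d (fst p) = n \<and> snd p \<in> J (fst p) \<and> st (fst p) (snd p) = i)"
  have P: "fst p \<in> L \<and> d (fst p) = n \<and> snd p \<in> J (fst p) \<and> st (fst p) (snd p) = i"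
    unfolding p_def by (rule theI'[OF partA[OF iI]])
  have "fst p = lam i n" using P st_K lam_eq by metis
  moreover have "sig n i = snd p" unfolding sigma_tilde_n_def p_def ..
  ultimately show ?thesis using P by simp
qed

lemma sig_eq: assumes x: "x \<in> L" and j: "j \<in> J x" shows "sig (d x) (st x j) = j"
proof -
  have sI: "st x j \<in> I" using K_sub_I[OF x st_K[OF x j]] .
  have "(THE p. fst p \<in> L \<and> d (fst p) = d x \<and> snd p \<in> J (fst p) \<and> st (fst p) (snd p) = st x j) = (x, j)"
    by (rule the1_equality[OF partA[OF sI]]) (use x j in simp)
  then show ?thesis unfolding sigma_tilde_n_def by simp
qed

end

theorem proposition4p3:
  fixes L :: "'a set" and r s :: "'a \<Rightarrow> 'a" and c :: "'a \<Rightarrow> 'a \<Rightarrow> 'a"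
    and d :: "'a \<Rightarrow> 'k::finite \<Rightarrow> nat"
    and I :: "'i set" and J K :: "'a \<Rightarrow> 'i set" and st :: "'a \<Rightarrow> 'i \<Rightarrow> 'i"
    and e :: "'i \<Rightarrow> 'h::zero" and t tstar :: "'a \<Rightarrow> 'h \<Rightarrow> 'h"
  assumes "k_graph L r s c d"
    and "row_finite L r d"
    and "no_sources L r d"
    and "permutative_rep L r s c d I J K st e t tstar"
  shows "(\<forall>i\<in>I. \<forall>n. \<exists>!p. fst p \<in> L \<and> d (fst p) = n \<and> snd p \<in> J (fst p) \<and> st (fst p) (snd p) = i)
    \<and> (\<forall>x\<in>L. \<forall>i\<in>K x. st x (sigma_tilde_n L d J st (d x) i) = i)
    \<and> (\<forall>x\<in>L. \<forall>i\<in>J x. sigma_tilde_n L d J st (d x) (st x i) = i)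
    \<and> (\<forall>x\<in>L. \<forall>i\<in>J x. prefix L r s c d x (encoding L r s c d K i) = encoding L r s c d K (st x i))
    \<and> (\<forall>n. \<forall>i\<in>I. shift n (encoding L r s c d K i) = encoding L r s c d K (sigma_tilde_n L d J st n i))"
proof -
  interpret P: PR L r s c d I J K st e t tstar using assms(1,4) by unfold_locales
  have a1: "\<forall>i\<in>I. \<forall>n. \<exists>!p. fst p \<in> L \<and> d (fst p) = n \<and> snd p \<in> J (fst p) \<and> st (fst p) (snd p) = i"
    using P.partA by blast
  have a2: "\<forall>x\<in>L. \<forall>i\<in>K x. st x (sigma_tilde_n L d J st (d x) i) = i"
  proof (intro ballI)
    fix x i assume x: "x \<in> L" and i: "i \<in> K x"
    have "i \<in> I" using P.K_sub_I[OF x i] .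
    then show "st x (sigma_tilde_n L d J st (d x) i) = i" using P.sig_prop P.lam_eq[OF x i] by metis
  qed
  have a3: "\<forall>x\<in>L. \<forall>i\<in>J x. sigma_tilde_n L d J st (d x) (st x i) = i" using P.sig_eq by blast
  have b1: "\<forall>x\<in>L. \<forall>i\<in>J x. prefix L r s c d x (encoding L r s c d K i) = encoding L r s c d K (st x i)"
    using P.prefix_E unfolding P.E_def by blast
  have b2: "\<forall>n. \<forall>i\<in>I. shift n (encoding L r s c d K i) = encoding L r s c d K (sigma_tilde_n L d J st n i)"
  proof (intro allI ballI)
    fix n i assume iI: "i \<in> I"
    define x where "x = P.lam i n"
    have x: "x \<in> L" "d x = n" using P.lam_prop[OF iI] x_def by auto
    have sg: "sigma_tilde_n L d J st n i \<in> J x" "st x (sigma_tilde_n L d J st n i) = i"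
      using P.sig_prop[OF iI] x_def by auto
    have "shift (d x) (P.E (st x (sigma_tilde_n L d J st n i))) = P.E (sigma_tilde_n L d J st n i)"
      using P.shift_E[OF x(1) sg(1)] .
    then show "shift n (encoding L r s c d K i) = encoding L r s c d K (sigma_tilde_n L d J st n i)"
      using sg(2) x(2) unfolding P.E_def by simp
  qed
  show ?thesis using a1 a2 a3 b1 b2 by blast
qed

end
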